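(* Let $G$ and $H$ be finite groups with $\mathrm{diam}(\Delta(G\times H))\le 2$. Then $\mathrm{diam}(\Delta(G))\le 2$ or $\mathrm{diam}(\Delta(H))\le 2$.
   Context: For a finite group $X$, the cyclic graph $\Delta(X)$ has vertex set $X^{\#}=X\setminus\{1\}$, and distinct vertices $x,y$ are adjacent if and only if the subgroup $\langle x,y\rangle$ is cyclic. The diameter is the maximum graph distance between two vertices, taken to be $\infty$ if the graph is disconnected. *)

theory Defs
  imports "HOL-Algebra.Algebra"
begin

definition cyc_vertices :: "('a, 'b) monoid_scheme \<Rightarrow> 'a set" where
  "cyc_vertices G = carrier G - {\<one>\<^bsub>G\<^esub>}"

definition cyc_adj :: "('a, 'b) monoid_scheme \<Rightarrow> 'a \<Rightarrow> 'a \<Rightarrow> bool" where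
  "cyc_adj G x y \<longleftrightarrow> x \<in> cyc_vertices G \<and> y \<in> cyc_vertices G \<and> x \<noteq> y
     \<and> cyclic_group (subgroup_generated G {x, y})"

definition cyc_walk :: "('a, 'b) monoid_scheme \<Rightarrow> 'a list \<Rightarrow> bool" where
  "cyc_walk G ps \<longleftrightarrow> ps \<noteq> [] \<and> set ps \<subseteq> cyc_vertices G
     \<and> (\<forall>i < length ps - 1. cyc_adj G (ps ! i) (ps ! Suc i))"

definition cyc_dist_le :: "('a, 'b) monoid_scheme \<Rightarrow> 'a \<Rightarrow> 'a \<Rightarrow> nat \<Rightarrow> bool" where
  "cyc_dist_le G x y n \<longleftrightarrow> (\<exists>ps. cyc_walk G ps \<and> hd ps = x \<and> last ps = y \<and> length ps - 1 \<le> n)"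

text \<open>Diameter of the cyclic graph is at most n (a disconnected graph has infinite diameter,
  so it never satisfies this).\<close>
definition cyc_diam_le :: "('a, 'b) monoid_scheme \<Rightarrow> nat \<Rightarrow> bool" where
  "cyc_diam_le G n \<longleftrightarrow> (\<forall>x \<in> cyc_vertices G. \<forall>y \<in> cyc_vertices G. cyc_dist_le G x y n)"

end

theory Submission
  imports Defs
begin

lemma (in group) cyc_of_powers:
  assumes z: "z \<in> carrier G" and x: "x = z [^] (i::int)" and y: "y = z [^] (j::int)"
  shows "cyclic_group (subgroup_generated G {x, y})"
proof -
  define g where "g = gcd i j"
  obtain a b where ab: "a * i + b * j = g" unfolding g_def using bezout_int by blast
  define w where "w = z [^] g"
  have xc: "x \<in> carrier G" and yc: "y \<in> carrier G" and wc: "w \<in> carrier G"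
    using z x y w_def by auto
  have sxy: "subgroup (generate G {x, y}) G" using xc yc by (intro generate_is_subgroup) auto
  have sw: "subgroup (generate G {w}) G" using wc by (intro generate_is_subgroup) auto
  have "w = x [^] a \<otimes> y [^] b"
    using z by (simp add: x y w_def int_pow_pow int_pow_mult[symmetric] ab[symmetric] mult.commute)
  moreover have "x [^] a \<in> generate G {x, y}" "y [^] b \<in> generate G {x, y}"
    using subgroup_int_pow_closed[OF sxy, of x a] subgroup_int_pow_closed[OF sxy, of y b]
      generate.incl[of x "{x, y}" G] generate.incl[of y "{x, y}" G] by auto
  ultimately have "w \<in> generate G {x, y}" using sxy subgroup.m_closed by fastforce
  hence 1: "generate G {w} \<subseteq> generate G {x, y}" using sxy by (intro generate_subgroup_incl) auto
  have "i = g * (i div g)" "j = g * (j div g)" unfolding g_def by simp_all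
  hence "x = w [^] (i div g)" "y = w [^] (j div g)"
    using z by (metis x w_def int_pow_pow, metis y w_def int_pow_pow)
  hence "x \<in> generate G {w}" "y \<in> generate G {w}"
    using subgroup_int_pow_closed[OF sw, of w] generate.incl[of w "{w}" G] by auto
  hence 2: "generate G {x, y} \<subseteq> generate G {w}" using sw by (intro generate_subgroup_incl) auto
  have "subgroup_generated G {x, y} = subgroup_generated G {w}"
    using 1 2 xc yc wc by (simp add: subgroup_generated_def Int_absorb1)
  thus ?thesis using cyclic_group_generated by simp
qed

lemma (in group) cyc_powers:
  assumes xc: "x \<in> carrier G" and yc: "y \<in> carrier G"
    and c: "cyclic_group (subgroup_generated G {x, y})"
  shows "\<exists>z \<in> carrier G. \<exists>i j. x = z [^] (i::int) \<and> y = z [^] (j::int)"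
proof -
  let ?S = "subgroup_generated G {x, y}"
  have gS: "group ?S" by (rule group_subgroup_generated)
  obtain z where zS: "z \<in> carrier ?S" and eq: "carrier ?S = range (\<lambda>n::int. z [^]\<^bsub>?S\<^esub> n)"
    using group.cyclic_group[OF gS] c by blast
  have zc: "z \<in> carrier G" using zS carrier_subgroup_generated_subset by blast
  have "x \<in> carrier ?S" "y \<in> carrier ?S" using xc yc
    by (auto simp: carrier_subgroup_generated intro: generate.incl)
  then obtain i j where "x = z [^]\<^bsub>?S\<^esub> (i::int)" "y = z [^]\<^bsub>?S\<^esub> (j::int)"
    using eq by blast
  then show ?thesis using zc zS by (metis int_pow_subgroup_generated)
qed

lemma cyc_proj:
  assumes G: "group G" and H: "group H"
    and p: "p \<in> carrier G \<times> carrier H" and q: "q \<in> carrier G \<times> carrier H"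
    and c: "cyclic_group (subgroup_generated (G \<times>\<times> H) {p, q})"
  shows "cyclic_group (subgroup_generated G {fst p, fst q}) \<and>
         cyclic_group (subgroup_generated H {snd p, snd q})"
proof -
  have GH: "group (G \<times>\<times> H)" using G H by (rule DirProd_group)
  obtain z i j where zc: "z \<in> carrier (G \<times>\<times> H)"
      and pz: "p = z [^]\<^bsub>G \<times>\<times> H\<^esub> (i::int)" and qz: "q = z [^]\<^bsub>G \<times>\<times> H\<^esub> (j::int)"
    using group.cyc_powers[OF GH _ _ c] p q by auto
  have hf: "fst \<in> hom (G \<times>\<times> H) G" and hs: "snd \<in> hom (G \<times>\<times> H) H"
    by (auto simp: hom_def mult_DirProd')
  have "fst p = fst z [^]\<^bsub>G\<^esub> i" "fst q = fst z [^]\<^bsub>G\<^esub> j"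
    using hom_int_pow[OF hf zc GH G] pz qz by auto
  moreover have "snd p = snd z [^]\<^bsub>H\<^esub> i" "snd q = snd z [^]\<^bsub>H\<^esub> j"
    using hom_int_pow[OF hs zc GH H] pz qz by auto
  ultimately show ?thesis using zc
    group.cyc_of_powers[OF G, of "fst z"] group.cyc_of_powers[OF H, of "snd z"] by auto
qed

lemma path3:
  assumes G: "group G"
    and u: "u \<in> cyc_vertices G" and v: "v \<in> cyc_vertices G" and w: "w \<in> cyc_vertices G"
    and c1: "cyclic_group (subgroup_generated G {u, v})"
    and c2: "cyclic_group (subgroup_generated G {v, w})"
  shows "cyc_dist_le G u w 2"
proof -
  have cw: "cyclic_group (subgroup_generated G {w, w})"
    using group.cyclic_group_generated[OF G] by simp
  consider "u = w" | "u \<noteq> w" "u = v" | "u \<noteq> w" "v = w" | "u \<noteq> w" "u \<noteq> v" "v \<noteq> w" by blast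
  then show ?thesis
  proof cases
    case 1
    then show ?thesis unfolding cyc_dist_le_def
      by (intro exI[of _ "[u]"]) (use u in \<open>auto simp: cyc_walk_def\<close>)
  next
    case 2
    then show ?thesis unfolding cyc_dist_le_def
      by (intro exI[of _ "[u, w]"]) (use u w c2 in \<open>auto simp: cyc_walk_def cyc_adj_def\<close>)
  next
    case 3
    then show ?thesis unfolding cyc_dist_le_def
      by (intro exI[of _ "[u, w]"]) (use u w c1 in \<open>auto simp: cyc_walk_def cyc_adj_def\<close>)
  next
    case 4
    then show ?thesis unfolding cyc_dist_le_def
      by (intro exI[of _ "[u, v, w]"])
         (use u v w c1 c2 in \<open>auto simp: cyc_walk_def cyc_adj_def numeral_2_eq_2 less_Suc_eq\<close>)
  qed
qed

theorem theorem4p3: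
  fixes G :: "('a, 'c) monoid_scheme" and H :: "('b, 'd) monoid_scheme"
  assumes "group G" and "group H"
    and "finite (carrier G)" and "finite (carrier H)"
    and "cyc_diam_le (G \<times>\<times> H) 2"
  shows "cyc_diam_le G 2 \<or> cyc_diam_le H 2"
proof (rule ccontr)
  assume "\<not> ?thesis"
  then obtain g1 g2 h1 h2 where g1: "g1 \<in> cyc_vertices G" and g2: "g2 \<in> cyc_vertices G"
    and h1: "h1 \<in> cyc_vertices H" and h2: "h2 \<in> cyc_vertices H"
    and ng: "\<not> cyc_dist_le G g1 g2 2" and nh: "\<not> cyc_dist_le H h1 h2 2"
    unfolding cyc_diam_le_def by blast
  have gcw: "\<And>x. x \<in> cyc_vertices G \<Longrightarrow> cyclic_group (subgroup_generated G {x, x})"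
    using group.cyclic_group_generated[OF assms(1)] by simp
  have hcw: "\<And>x. x \<in> cyc_vertices H \<Longrightarrow> cyclic_group (subgroup_generated H {x, x})"
    using group.cyclic_group_generated[OF assms(2)] by simp
  have "(g1, h1) \<in> cyc_vertices (G \<times>\<times> H)" "(g2, h2) \<in> cyc_vertices (G \<times>\<times> H)"
    using g1 g2 h1 h2 by (auto simp: cyc_vertices_def)
  then obtain ps where w: "cyc_walk (G \<times>\<times> H) ps" and hd: "hd ps = (g1, h1)"
    and lst: "last ps = (g2, h2)" and len: "length ps - 1 \<le> 2"
    using assms(5) unfolding cyc_diam_le_def cyc_dist_le_def by blast
  have ne: "ps \<noteq> []" and sub: "set ps \<subseteq> cyc_vertices (G \<times>\<times> H)"
    and adj: "\<And>i. i < length ps - 1 \<Longrightarrow> cyc_adj (G \<times>\<times> H) (ps ! i) (ps ! Suc i)"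
    using w unfolding cyc_walk_def by auto
  have hd0: "ps ! 0 = (g1, h1)" using hd ne by (simp add: hd_conv_nth)
  have lstn: "ps ! (length ps - 1) = (g2, h2)" using lst ne by (simp add: last_conv_nth)
  have cv: "\<And>i. i < length ps \<Longrightarrow> ps ! i \<in> cyc_vertices (G \<times>\<times> H)"
    using sub by auto
  have proj: "cyclic_group (subgroup_generated G {fst (ps ! i), fst (ps ! Suc i)}) \<and>
      cyclic_group (subgroup_generated H {snd (ps ! i), snd (ps ! Suc i)})"
    if "i < length ps - 1" for i
    using adj[OF that] cyc_proj[OF assms(1,2)] by (auto simp: cyc_adj_def cyc_vertices_def)
  have "length ps = 1 \<or> length ps = 2 \<or> length ps = 3"
    using len ne length_greater_0_conv[of ps] by linarith
  then consider "length ps = 1" | "length ps = 2" | "length ps = 3" by blast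
  then show False
  proof cases
    case 1
    then have "g1 = g2" using hd0 lstn by simp
    then show False using ng path3[OF assms(1) g1 g1 g1 gcw[OF g1] gcw[OF g1]] by simp
  next
    case 2
    then show False using proj[of 0] hd0 lstn ng path3[OF assms(1) g1 g2 g2 _ gcw[OF g2]] by simp
  next
    case 3
    obtain a b where m: "ps ! 1 = (a, b)" by (cases "ps ! 1") auto
    have "(a, b) \<in> cyc_vertices (G \<times>\<times> H)" using cv[of 1] m 3 by simp
    hence ab: "a \<in> carrier G" "b \<in> carrier H" "a \<noteq> \<one>\<^bsub>G\<^esub> \<or> b \<noteq> \<one>\<^bsub>H\<^esub>"
      by (auto simp: cyc_vertices_def)
    have p0: "cyclic_group (subgroup_generated G {g1, a}) \<and> cyclic_group (subgroup_generated H {h1, b})"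
      using proj[of 0] 3 hd0 m by simp
    have p1: "cyclic_group (subgroup_generated G {a, g2}) \<and> cyclic_group (subgroup_generated H {b, h2})"
      using proj[of 1] 3 lstn m by (simp add: numeral_2_eq_2)
    show False
    proof (cases "a = \<one>\<^bsub>G\<^esub>")
      case True
      then have "b \<in> cyc_vertices H" using ab by (auto simp: cyc_vertices_def)
      then show False using path3[OF assms(2) h1 _ h2] p0 p1 nh by blast
    next
      case False
      then have "a \<in> cyc_vertices G" using ab by (auto simp: cyc_vertices_def)
      then show False using path3[OF assms(1) g1 _ g2] p0 p1 ng by blast
    qed
  qed
qed

end
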